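(* Let $r\ge0$ be an integer and $T\in\overline{\mathrm{Sub}}(X,1)$ with $T\subset B(1,r)$. Let $(\Delta_1,\tau_1),(\Delta_2,\tau_2)$ be $R_N$-core graphs, $(v_1,v_2)\in V(\Delta_1)\times V(\Delta_2)$, and $\Gamma$ the connected component of $\Delta_1\times_{R_N}\Delta_2$ containing $(v_1,v_2)$. Then there exists a based $R_N$-graph isomorphism $(T,1)\to(\Gamma,(v_1,v_2))$ if and only if $T_{r+1}(v_1)\cap T_{r+1}(v_2)=T$.
   Context: $N\ge2$, $F_N$ free with free basis $A$, $X$ its Cayley graph (tree with vertex set $F_N$, unit edge lengths, metric $d_X$), $B(1,r)$ the closed ball of radius $r$ about $1$, $R_N=F_N\backslash X$ the rose. An $R_N$-graph is a graph with a graph morphism $\tau$ to $R_N$; $R_N$-graph morphisms commute with these maps; subtrees of $X$ are $R_N$-graphs via the projection $X\to R_N$. An $R_N$-core graph is a finite $R_N$-graph with $\tau$ locally injective and no vertices of degree $0$ or $1$. $\overline{\mathrm{Sub}}(X,1)$: finite subtrees of $X$ containing $1$ (including $\{1\}$). For $m\ge1$, $\mathcal{R}_m$: finite subtrees $T'\ni1$ in which $1$ has degree $\ge2$ and all degree-one vertices are at distance exactly $m$ from $1$. A based occurrence $(T',1)\to(\Delta,v)$ is an $R_N$-graph morphism sending $1\mapsto v$ and preserving degrees of vertices of degree $\ge2$ in $T'$. For an $R_N$-core graph $\Delta$ and $v\in V(\Delta)$, $T_m(v)$ denotes the unique $T'\in\mathcal{R}_m$ admitting a based occurrence $(T',1)\to(\Delta,v)$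 (the $m$-neighborhood of $v$). The fiber product $\Delta_1\times_{R_N}\Delta_2$ has vertex set $V(\Delta_1)\times V(\Delta_2)$ and an edge labeled $a$ from $(o(e_1),o(e_2))$ to $(t(e_1),t(e_2))$ for each pair of edges $e_1,e_2$ with label $a$. *)

theory Defs
  imports Main
begin

(* ---------- R_N-graphs ----------
   The rose R_N has one vertex and N loops labelled 0..N-1 (the free basis A).
   An R_N-graph is represented by its vertex set and its set of labelled
   directed edges (origin, label, terminus); tau sends an edge to its label.
   Edges are stored as triples, which is faithful for all graphs occurring in
   the statement (locally injective graphs have no parallel edges with equal
   label and orientation; subtrees of X and fibre products of such graphs
   neither). *)

record 'v rgraph =
  verts :: "'v set"
  edges :: "('v \<times> nat \<times> 'v) set"

definition wf_rgraph :: "nat \<Rightarrow> 'v rgraph \<Rightarrow> bool" where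
  "wf_rgraph N G \<longleftrightarrow> edges G \<subseteq> verts G \<times> {..<N} \<times> verts G"

(* degree: number of incident edge-ends (a loop counts twice) *)
definition degree :: "'v rgraph \<Rightarrow> 'v \<Rightarrow> nat" where
  "degree G v = card {(a, w). (v, a, w) \<in> edges G} + card {(u, a). (u, a, v) \<in> edges G}"

definition locally_injective :: "'v rgraph \<Rightarrow> bool" where
  "locally_injective G \<longleftrightarrow>
     (\<forall>v a w w'. (v, a, w) \<in> edges G \<and> (v, a, w') \<in> edges G \<longrightarrow> w = w') \<and>
     (\<forall>v a u u'. (u, a, v) \<in> edges G \<and> (u', a, v) \<in> edges G \<longrightarrow> u = u')"

definition core_graph :: "nat \<Rightarrow> 'v rgraph \<Rightarrow> bool" where
  "core_graph N G \<longleftrightarrow> wf_rgraph N G \<and> finite (verts G) \<and> locally_injective G \<and>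
     (\<forall>v\<in>verts G. degree G v \<noteq> 0 \<and> degree G v \<noteq> 1)"

(* R_N-graph morphisms (commuting with tau = preserving labels) *)
definition rmorphism :: "'v rgraph \<Rightarrow> 'w rgraph \<Rightarrow> ('v \<Rightarrow> 'w) \<Rightarrow> bool" where
  "rmorphism G H f \<longleftrightarrow> f ` verts G \<subseteq> verts H \<and>
     (\<forall>u a w. (u, a, w) \<in> edges G \<longrightarrow> (f u, a, f w) \<in> edges H)"

definition based_iso :: "'v rgraph \<Rightarrow> 'v \<Rightarrow> 'w rgraph \<Rightarrow> 'w \<Rightarrow> bool" where
  "based_iso G x H y \<longleftrightarrow> (\<exists>f. bij_betw f (verts G) (verts H) \<and> f x = y \<and>
     (\<forall>u\<in>verts G. \<forall>w\<in>verts G. \<forall>a. (u, a, w) \<in> edges G \<longleftrightarrow> (f u, a, f w) \<in> edges H))"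

definition adj :: "'v rgraph \<Rightarrow> 'v \<Rightarrow> 'v \<Rightarrow> bool" where
  "adj G u w \<longleftrightarrow> (\<exists>a. (u, a, w) \<in> edges G \<or> (w, a, u) \<in> edges G)"

definition comp_verts :: "'v rgraph \<Rightarrow> 'v \<Rightarrow> 'v set" where
  "comp_verts G x = {y. (x, y) \<in> {(u, w). adj G u w}\<^sup>*}"

definition component :: "'v rgraph \<Rightarrow> 'v \<Rightarrow> 'v rgraph" where
  "component G x = \<lparr>verts = comp_verts G x,
                     edges = {(u, a, w) \<in> edges G. u \<in> comp_verts G x}\<rparr>"

definition induced :: "'v rgraph \<Rightarrow> 'v set \<Rightarrow> 'v rgraph" where
  "induced G S = \<lparr>verts = S, edges = {(u, a, w) \<in> edges G. u \<in> S \<and> w \<in> S}\<rparr>"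

definition fiber_product :: "'v rgraph \<Rightarrow> 'w rgraph \<Rightarrow> ('v \<times> 'w) rgraph" where
  "fiber_product G H = \<lparr>verts = verts G \<times> verts H,
     edges = {((u1, u2), a, (w1, w2)) | u1 u2 a w1 w2.
                (u1, a, w1) \<in> edges G \<and> (u2, a, w2) \<in> edges H}\<rparr>"

(* ---------- Free group F_N and its Cayley graph X ----------
   Elements of F_N are reduced words; a letter is (i, True) = a_i or
   (i, False) = a_i^{-1}, with i < N.  1 is the empty word. *)

type_synonym letter = "nat \<times> bool"

definition reduced :: "letter list \<Rightarrow> bool" where
  "reduced w \<longleftrightarrow> (\<forall>i. Suc i < length w \<longrightarrow> w ! Suc i \<noteq> (fst (w ! i), \<not> snd (w ! i)))"

definition FN :: "nat \<Rightarrow> letter list set" where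
  "FN N = {w. reduced w \<and> (\<forall>x\<in>set w. fst x < N)}"

definition rmult :: "letter list \<Rightarrow> nat \<Rightarrow> letter list" where
  "rmult w i = (if w \<noteq> [] \<and> last w = (i, False) then butlast w else w @ [(i, True)])"

definition cayley :: "nat \<Rightarrow> letter list rgraph" where
  "cayley N = \<lparr>verts = FN N, edges = {(w, i, rmult w i) | w i. w \<in> FN N \<and> i < N}\<rparr>"

(* a subtree of X given by its vertex set (subtrees of a tree are induced) *)
definition tree_graph :: "nat \<Rightarrow> letter list set \<Rightarrow> letter list rgraph" where
  "tree_graph N T = induced (cayley N) T"

definition SubX1 :: "nat \<Rightarrow> letter list set set" where
  "SubX1 N = {T. finite T \<and> [] \<in> T \<and> T \<subseteq> FN N \<and> comp_verts (tree_graph N T) [] = T}"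

(* closed ball B(1,r) in X: d_X(1,w) is the length of the reduced word w *)
definition ballX :: "nat \<Rightarrow> nat \<Rightarrow> letter list set" where
  "ballX N r = {w \<in> FN N. length w \<le> r}"

definition Rm :: "nat \<Rightarrow> nat \<Rightarrow> letter list set set" where
  "Rm N m = {T \<in> SubX1 N. degree (tree_graph N T) [] \<ge> 2 \<and>
              (\<forall>w\<in>T. degree (tree_graph N T) w = 1 \<longrightarrow> length w = m)}"

definition based_occurrence :: "nat \<Rightarrow> letter list set \<Rightarrow> 'v rgraph \<Rightarrow> 'v \<Rightarrow> (letter list \<Rightarrow> 'v) \<Rightarrow> bool" where
  "based_occurrence N T D v f \<longleftrightarrow> rmorphism (tree_graph N T) D f \<and> f [] = v \<and>
     (\<forall>w\<in>T. degree (tree_graph N T) w \<ge> 2 \<longrightarrow> degree D (f w) = degree (tree_graph N T) w)"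

definition nbhd :: "nat \<Rightarrow> 'v rgraph \<Rightarrow> nat \<Rightarrow> 'v \<Rightarrow> letter list set" where
  "nbhd N D m v = (THE T. T \<in> Rm N m \<and> (\<exists>f. based_occurrence N T D v f))"

end

theory Submission
  imports Defs
begin


definition invl :: "letter \<Rightarrow> letter" where "invl l = (fst l, \<not> snd l)"

lemma inv_inv[simp]: "invl (invl l) = l" by (simp add: invl_def)
lemma inv_neq[simp]: "invl l \<noteq> l" "l \<noteq> invl l" by (auto simp: invl_def prod_eq_iff)
lemma inv_eq_iff: "invl a = b \<longleftrightarrow> a = invl b" by (auto simp: invl_def prod_eq_iff)
lemma fst_inv[simp]: "fst (invl l) = fst l" by (simp add: invl_def)

fun red :: "letter list \<Rightarrow> bool" where
  "red [] = True" | "red [x] = True" | "red (x#y#w) = (y \<noteq> invl x \<and> red (y#w))"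

lemma reduced_Cons2: "reduced (x#y#w) \<longleftrightarrow> y \<noteq> invl x \<and> reduced (y#w)"
proof
  assume a: "reduced (x#y#w)"
  have "y \<noteq> invl x" using a[unfolded reduced_def, rule_format, of 0] by (simp add: invl_def)
  moreover have "reduced (y#w)" unfolding reduced_def
  proof (intro allI impI)
    fix i assume "Suc i < length (y#w)"
    then show "(y#w) ! Suc i \<noteq> (fst ((y#w) ! i), \<not> snd ((y#w) ! i))"
      using a[unfolded reduced_def, rule_format, of "Suc i"] by simp
  qed
  ultimately show "y \<noteq> invl x \<and> reduced (y#w)" by simp
next
  assume a: "y \<noteq> invl x \<and> reduced (y#w)"
  show "reduced (x#y#w)" unfolding reduced_def
  proof (intro allI impI)
    fix i assume i: "Suc i < length (x#y#w)"
    show "(x#y#w) ! Suc i \<noteq> (fst ((x#y#w) ! i), \<not> snd ((x#y#w) ! i))"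
    proof (cases i)
      case 0 then show ?thesis using a by (simp add: invl_def)
    next
      case (Suc j) then show ?thesis using a[THEN conjunct2, unfolded reduced_def, rule_format, of j] i by simp
    qed
  qed
qed

lemma reduced_red: "reduced w = red w"
proof (induction w rule: red.induct)
  case 1 then show ?case by (simp add: reduced_def)
next
  case (2 x) then show ?case by (simp add: reduced_def)
next
  case (3 x y w) then show ?case by (simp add: reduced_Cons2)
qed

lemma red_append: "red (u @ w) \<longleftrightarrow> red u \<and> red w \<and> (u \<noteq> [] \<longrightarrow> w \<noteq> [] \<longrightarrow> hd w \<noteq> invl (last u))"
proof (induction u rule: red.induct)
  case 1 then show ?case by simp
next
  case (2 x) then show ?case by (cases w) auto
next
  case (3 x y u) then show ?case by auto
qed

lemma red_snoc: "red (u @ [l]) \<longleftrightarrow> red u \<and> (u \<noteq> [] \<longrightarrow> l \<noteq> invl (last u))"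
  by (simp add: red_append)

definition invw :: "letter list \<Rightarrow> letter list" where "invw w = rev (map invl w)"

lemma invw_simps[simp]: "invw [] = []" "invw (x#w) = invw w @ [invl x]" "invw (u@w) = invw w @ invw u"
  by (auto simp: invw_def)
lemma invw_Nil_iff[simp]: "invw w = [] \<longleftrightarrow> w = []" by (auto simp: invw_def)
lemma last_invw: "w \<noteq> [] \<Longrightarrow> last (invw w) = invl (hd w)" by (cases w) auto
lemma hd_invw: "w \<noteq> [] \<Longrightarrow> hd (invw w) = invl (last w)" by (induction w) auto
lemma set_invw: "set (invw w) = invl ` set w" by (auto simp: invw_def)

lemma red_invw: "red (invw w) = red w"
proof (induction w)
  case Nil then show ?case by simp
next
  case (Cons x w) then show ?case
    by (cases w) (auto simp: red_append last_invw inv_eq_iff)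
qed

lemma FN_iff: "w \<in> FN N \<longleftrightarrow> red w \<and> (\<forall>x\<in>set w. fst x < N)"
  by (simp add: FN_def reduced_red)

lemma FN_append: "u @ w \<in> FN N \<longleftrightarrow> u \<in> FN N \<and> w \<in> FN N \<and> (u \<noteq> [] \<longrightarrow> w \<noteq> [] \<longrightarrow> hd w \<noteq> invl (last u))"
  by (auto simp: FN_iff red_append)

lemma FN_Nil[simp]: "[] \<in> FN N" by (simp add: FN_iff)

lemma FN_take: "w \<in> FN N \<Longrightarrow> take k w \<in> FN N"
  using FN_append[of "take k w" "drop k w"] by simp

lemma FN_butlast: "w \<in> FN N \<Longrightarrow> butlast w \<in> FN N"
  by (simp add: butlast_conv_take FN_take)

lemma FN_invw: "w \<in> FN N \<Longrightarrow> invw w \<in> FN N"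
  by (auto simp: FN_iff red_invw set_invw)

definition mul :: "letter list \<Rightarrow> letter \<Rightarrow> letter list" where
  "mul u l = (if u \<noteq> [] \<and> last u = invl l then butlast u else u @ [l])"

lemma FN_mul: assumes "u \<in> FN N" "fst l < N" shows "mul u l \<in> FN N"
proof (cases "u \<noteq> [] \<and> last u = invl l")
  case True then show ?thesis using assms by (simp add: mul_def FN_butlast)
next
  case False
  have "[l] \<in> FN N" using assms by (simp add: FN_iff)
  then show ?thesis using False assms by (auto simp: mul_def FN_append inv_eq_iff)
qed

lemma rmult_mul: "rmult w i = mul w (i, True)"
  by (simp add: rmult_def mul_def invl_def)



definition dedge :: "'v rgraph \<Rightarrow> 'v \<Rightarrow> letter \<Rightarrow> 'v \<Rightarrow> bool" where
  "dedge G x l y = (if snd l then (x, fst l, y) \<in> edges G else (y, fst l, x) \<in> edges G)"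

lemma dedge_inv: "dedge G y (invl l) x \<longleftrightarrow> dedge G x l y"
  by (simp add: dedge_def invl_def)

lemma li_iff: "locally_injective G \<longleftrightarrow> (\<forall>x l y y'. dedge G x l y \<longrightarrow> dedge G x l y' \<longrightarrow> y = y')"
proof
  assume a: "locally_injective G"
  show "\<forall>x l y y'. dedge G x l y \<longrightarrow> dedge G x l y' \<longrightarrow> y = y'"
  proof (intro allI impI)
    fix x l y y' assume "dedge G x l y" "dedge G x l y'"
    then show "y = y'" using a unfolding locally_injective_def dedge_def
      by (cases "snd l") auto
  qed
next
  assume a: "\<forall>x l y y'. dedge G x l y \<longrightarrow> dedge G x l y' \<longrightarrow> y = y'"
  show "locally_injective G" unfolding locally_injective_def
  proof (intro conjI allI impI)
    fix v a w w' assume "(v, a, w) \<in> edges G \<and> (v, a, w') \<in> edges G"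
    then show "w = w'" using a[rule_format, of v "(a, True)" w w'] by (simp add: dedge_def)
  next
    fix v a u u' assume "(u, a, v) \<in> edges G \<and> (u', a, v) \<in> edges G"
    then show "u = u'" using a[rule_format, of v "(a, False)" u u'] by (simp add: dedge_def)
  qed
qed

lemma li_det: "locally_injective G \<Longrightarrow> dedge G x l y \<Longrightarrow> dedge G x l y' \<Longrightarrow> y = y'"
  unfolding li_iff by blast

lemma li_det_back: "locally_injective G \<Longrightarrow> dedge G y l x \<Longrightarrow> dedge G y' l x \<Longrightarrow> y = y'"
  using li_det[of G x "invl l" y y'] by (simp add: dedge_inv)

lemma adj_iff: "adj G u w \<longleftrightarrow> (\<exists>l. dedge G u l w)"
proof
  assume "adj G u w"
  then obtain a where "(u, a, w) \<in> edges G \<or> (w, a, u) \<in> edges G" by (auto simp: adj_def)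
  then show "\<exists>l. dedge G u l w"
  proof
    assume "(u, a, w) \<in> edges G" then show ?thesis by (intro exI[of _ "(a, True)"]) (simp add: dedge_def)
  next
    assume "(w, a, u) \<in> edges G" then show ?thesis by (intro exI[of _ "(a, False)"]) (simp add: dedge_def)
  qed
next
  assume "\<exists>l. dedge G u l w"
  then obtain l where "dedge G u l w" by blast
  then show "adj G u w" unfolding adj_def dedge_def by (cases "snd l") auto
qed

definition labs :: "nat \<Rightarrow> 'v rgraph \<Rightarrow> bool" where
  "labs N G \<longleftrightarrow> (\<forall>u a w. (u, a, w) \<in> edges G \<longrightarrow> a < N)"

lemma labs_dedge: "labs N G \<Longrightarrow> dedge G x l y \<Longrightarrow> fst l < N"
  by (auto simp: labs_def dedge_def split: if_splits)

lemma wf_labs: "wf_rgraph N G \<Longrightarrow> labs N G"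
  by (auto simp: wf_rgraph_def labs_def)

fun walk :: "'v rgraph \<Rightarrow> 'v \<Rightarrow> letter list \<Rightarrow> 'v \<Rightarrow> bool" where
  "walk G x [] y = (x = y)"
| "walk G x (l#w) y = (\<exists>z. dedge G x l z \<and> walk G z w y)"

lemma walk_append: "walk G x (u@w) y \<longleftrightarrow> (\<exists>z. walk G x u z \<and> walk G z w y)"
  by (induction u arbitrary: x) auto

lemma walk_snoc: "walk G x (u@[l]) y \<longleftrightarrow> (\<exists>z. walk G x u z \<and> dedge G z l y)"
  by (simp add: walk_append)

lemma walk_det: "locally_injective G \<Longrightarrow> walk G x w y \<Longrightarrow> walk G x w y' \<Longrightarrow> y = y'"
  by (induction w arbitrary: x) (auto dest: li_det)

lemma walk_det_back: "locally_injective G \<Longrightarrow> walk G x w y \<Longrightarrow> walk G x' w y \<Longrightarrow> x = x'"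
proof (induction w arbitrary: x x')
  case Nil then show ?case by simp
next
  case (Cons l w)
  then obtain z z' where "dedge G x l z" "walk G z w y" "dedge G x' l z'" "walk G z' w y" by auto
  with Cons show ?case using li_det_back[of G x l z x'] by blast
qed

lemma walk_invw: "walk G x w y \<Longrightarrow> walk G y (invw w) x"
  by (induction w arbitrary: x) (auto simp: walk_append dedge_inv)

lemma walk_labs: "labs N G \<Longrightarrow> walk G x w y \<Longrightarrow> \<forall>l\<in>set w. fst l < N"
  by (induction w arbitrary: x) (auto dest: labs_dedge)

lemma walk_mul:
  assumes li: "locally_injective G" and "walk G x w y" "w \<in> FN N" "dedge G y l z"
  shows "walk G x (mul w l) z"
proof (cases "w \<noteq> [] \<and> last w = invl l")
  case True
  then have w: "w = butlast w @ [invl l]" by (metis append_butlast_last_id)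
  have "walk G x (butlast w @ [invl l]) y" using assms(2) by (subst (asm) w)
  then obtain y0 where y0: "walk G x (butlast w) y0" "dedge G y0 (invl l) y"
    unfolding walk_snoc by blast
  then have "dedge G y l y0" using dedge_inv[of G y0 l y] by simp
  then have "y0 = z" using li_det[OF li _ assms(4)] by blast
  moreover have "mul w l = butlast w" using True unfolding mul_def by simp
  ultimately show ?thesis using y0(1) by simp
next
  case False then show ?thesis using assms by (auto simp: mul_def walk_snoc)
qed

lemma walk_reduce:
  assumes li: "locally_injective G" and lb: "labs N G" and "walk G x w y"
  shows "\<exists>w'\<in>FN N. walk G x w' y"
  using assms(3)
proof (induction w arbitrary: y rule: rev_induct)
  case Nil then show ?case by (intro bexI[of _ "[]"]) auto
next
  case (snoc l w)
  then obtain y0 where "walk G x w y0" "dedge G y0 l y" by (auto simp: walk_snoc)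
  then obtain w' where "w' \<in> FN N" "walk G x w' y0" using snoc by auto
  then show ?case using walk_mul[OF li] FN_mul labs_dedge[OF lb] \<open>dedge G y0 l y\<close> by blast
qed

lemma rtrancl_walk: "(x, y) \<in> {(u, w). adj G u w}\<^sup>* \<longleftrightarrow> (\<exists>w. walk G x w y)"
proof
  assume "(x, y) \<in> {(u, w). adj G u w}\<^sup>*"
  then show "\<exists>w. walk G x w y"
  proof (induction rule: rtrancl_induct)
    case base then show ?case by (intro exI[of _ "[]"]) simp
  next
    case (step y z)
    from step.IH obtain w where w: "walk G x w y" by blast
    from step.hyps(2) have "adj G y z" by simp
    then obtain l where l: "dedge G y l z" unfolding adj_iff by blast
    have "walk G x (w@[l]) z" unfolding walk_snoc using w l by blast
    then show ?case by blast
  qed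
next
  assume "\<exists>w. walk G x w y"
  then obtain w where "walk G x w y" by blast
  then show "(x, y) \<in> {(u, w). adj G u w}\<^sup>*"
  proof (induction w arbitrary: y rule: rev_induct)
    case Nil then show ?case by simp
  next
    case (snoc l w)
    then obtain y0 where "walk G x w y0" "dedge G y0 l y" unfolding walk_snoc by blast
    have r1: "(x, y0) \<in> {(u, w). adj G u w}\<^sup>*" using snoc.IH[OF \<open>walk G x w y0\<close>] .
    have "adj G y0 y" unfolding adj_iff using \<open>dedge G y0 l y\<close> by blast
    then have r2: "(y0, y) \<in> {(u, w). adj G u w}" by simp
    from r1 r2 show ?case by (rule rtrancl_into_rtrancl)
  qed
qed

lemma comp_verts_walk: "y \<in> comp_verts G x \<longleftrightarrow> (\<exists>w. walk G x w y)"
  by (simp add: comp_verts_def rtrancl_walk)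

definition dirs :: "'v rgraph \<Rightarrow> 'v \<Rightarrow> letter set" where
  "dirs G v = {l. \<exists>z. dedge G v l z}"

lemma dirs_finite: assumes lb: "labs N G" shows "finite (dirs G v)"
proof -
  have "dirs G v \<subseteq> {..<N} \<times> UNIV"
  proof
    fix l assume "l \<in> dirs G v"
    then obtain z where "dedge G v l z" unfolding dirs_def by blast
    then have "fst l < N" by (rule labs_dedge[OF lb])
    then show "l \<in> {..<N} \<times> UNIV" by (cases l) simp
  qed
  then show ?thesis by (rule finite_subset) simp
qed

lemma card_out:
  assumes li: "locally_injective G"
  shows "card {(a, w). (v, a, w) \<in> edges G} = card {a. \<exists>w. (v, a, w) \<in> edges G}"
proof -
  let ?S = "{(a, w). (v, a, w) \<in> edges G}"
  have "inj_on fst ?S"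
  proof (rule inj_onI)
    fix x y assume x: "x \<in> ?S" and y: "y \<in> ?S" and e: "fst x = fst y"
    obtain a w where xa: "x = (a, w)" by (cases x)
    obtain a' w' where ya: "y = (a', w')" by (cases y)
    have "(v, a, w) \<in> edges G" "(v, a, w') \<in> edges G" using x y e xa ya by auto
    then have "w = w'" using li unfolding locally_injective_def by blast
    then show "x = y" using xa ya e by simp
  qed
  moreover have "fst ` ?S = {a. \<exists>w. (v, a, w) \<in> edges G}"
  proof
    show "fst ` ?S \<subseteq> {a. \<exists>w. (v, a, w) \<in> edges G}" by auto
    show "{a. \<exists>w. (v, a, w) \<in> edges G} \<subseteq> fst ` ?S"
    proof
      fix a assume "a \<in> {a. \<exists>w. (v, a, w) \<in> edges G}"
      then obtain w where "(v, a, w) \<in> edges G" by blast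
      then have "(a, w) \<in> ?S" by simp
      then show "a \<in> fst ` ?S" by (rule rev_image_eqI) simp
    qed
  qed
  ultimately show ?thesis using card_image[of fst ?S] by simp
qed

lemma card_in:
  assumes li: "locally_injective G"
  shows "card {(u, a). (u, a, v) \<in> edges G} = card {a. \<exists>u. (u, a, v) \<in> edges G}"
proof -
  let ?S = "{(u, a). (u, a, v) \<in> edges G}"
  have "inj_on snd ?S"
  proof (rule inj_onI)
    fix x y assume x: "x \<in> ?S" and y: "y \<in> ?S" and e: "snd x = snd y"
    obtain u a where xa: "x = (u, a)" by (cases x)
    obtain u' a' where ya: "y = (u', a')" by (cases y)
    have "(u, a, v) \<in> edges G" "(u', a, v) \<in> edges G" using x y e xa ya by auto
    then have "u = u'" using li unfolding locally_injective_def by blast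
    then show "x = y" using xa ya e by simp
  qed
  moreover have "snd ` ?S = {a. \<exists>u. (u, a, v) \<in> edges G}"
  proof
    show "snd ` ?S \<subseteq> {a. \<exists>u. (u, a, v) \<in> edges G}" by auto
    show "{a. \<exists>u. (u, a, v) \<in> edges G} \<subseteq> snd ` ?S"
    proof
      fix a assume "a \<in> {a. \<exists>u. (u, a, v) \<in> edges G}"
      then obtain u where "(u, a, v) \<in> edges G" by blast
      then have "(u, a) \<in> ?S" by simp
      then show "a \<in> snd ` ?S" by (rule rev_image_eqI) simp
    qed
  qed
  ultimately show ?thesis using card_image[of snd ?S] by simp
qed

lemma dirs_split:
  "dirs G v = (\<lambda>a. (a, True)) ` {a. \<exists>w. (v, a, w) \<in> edges G} \<union> (\<lambda>a. (a, False)) ` {a. \<exists>u. (u, a, v) \<in> edges G}"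
proof (rule set_eqI)
  fix l :: letter
  obtain a b where l: "l = (a, b)" by (cases l)
  show "l \<in> dirs G v \<longleftrightarrow> l \<in> (\<lambda>a. (a, True)) ` {a. \<exists>w. (v, a, w) \<in> edges G} \<union> (\<lambda>a. (a, False)) ` {a. \<exists>u. (u, a, v) \<in> edges G}"
    unfolding l dirs_def dedge_def by (cases b) auto
qed

lemma degree_dirs:
  assumes li: "locally_injective G" and lb: "labs N G"
  shows "degree G v = card (dirs G v)"
proof -
  let ?O = "{a. \<exists>w. (v, a, w) \<in> edges G}" and ?I = "{a. \<exists>u. (u, a, v) \<in> edges G}"
  have fO: "finite ?O"
  proof (rule finite_subset[of _ "{..<N}"])
    show "?O \<subseteq> {..<N}" using lb unfolding labs_def by blast
  qed simp
  have fI: "finite ?I"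
  proof (rule finite_subset[of _ "{..<N}"])
    show "?I \<subseteq> {..<N}" using lb unfolding labs_def by blast
  qed simp
  have dj: "(\<lambda>a. (a, True)) ` ?O \<inter> (\<lambda>a. (a, False)) ` ?I = {}" by blast
  have "card (dirs G v) = card ((\<lambda>a. (a, True)) ` ?O) + card ((\<lambda>a. (a, False)) ` ?I)"
    unfolding dirs_split
  proof (rule card_Un_disjoint)
    show "finite ((\<lambda>a. (a, True)) ` ?O)" using fO by (rule finite_imageI)
    show "finite ((\<lambda>a. (a, False)) ` ?I)" using fI by (rule finite_imageI)
  qed (rule dj)
  also have "card ((\<lambda>a. (a, True)) ` ?O) = card ?O" by (rule card_image) (simp add: inj_on_def)
  also have "card ((\<lambda>a. (a, False)) ` ?I) = card ?I" by (rule card_image) (simp add: inj_on_def)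
  finally have "card (dirs G v) = card ?O + card ?I" .
  then show ?thesis unfolding degree_def using card_out[OF li, of v] card_in[OF li, of v] by simp
qed



lemma mul_inverse:
  assumes u: "u \<in> FN N" shows "mul (mul u l) (invl l) = u"
proof (cases "u \<noteq> [] \<and> last u = invl l")
  case True
  have ub: "u = butlast u @ [invl l]" using True by (metis append_butlast_last_id)
  have "\<not> (butlast u \<noteq> [] \<and> last (butlast u) = l)"
  proof
    assume h: "butlast u \<noteq> [] \<and> last (butlast u) = l"
    have "butlast u @ [invl l] \<in> FN N" using u ub by simp
    then show False using h by (simp add: FN_append)
  qed
  have m1: "mul u l = butlast u" using True by (simp add: mul_def)
  have "mul (butlast u) (invl l) = butlast u @ [invl l]"
    using \<open>\<not> (butlast u \<noteq> [] \<and> last (butlast u) = l)\<close> unfolding mul_def by auto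
  then show ?thesis using m1 ub by simp
next
  case False
  then have "mul u l = u @ [l]" unfolding mul_def by auto
  then show ?thesis unfolding mul_def by simp
qed

lemma tree_edge_iff:
  "(u, a, z) \<in> edges (tree_graph N S) \<longleftrightarrow> u \<in> S \<and> z \<in> S \<and> u \<in> FN N \<and> a < N \<and> z = mul u (a, True)"
  by (auto simp: tree_graph_def induced_def cayley_def rmult_mul)

lemma dedge_tree:
  assumes S: "S \<subseteq> FN N"
  shows "dedge (tree_graph N S) u l z \<longleftrightarrow> u \<in> S \<and> z \<in> S \<and> fst l < N \<and> z = mul u l"
proof (cases "snd l")
  case True
  then obtain a where l: "l = (a, True)" by (cases l) auto
  show ?thesis unfolding l using S by (simp add: dedge_def tree_edge_iff) blast
next
  case False
  have il: "invl l = (fst l, True)" using False by (simp add: invl_def prod_eq_iff)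
  have "dedge (tree_graph N S) u l z \<longleftrightarrow> z \<in> S \<and> u \<in> S \<and> z \<in> FN N \<and> fst l < N \<and> u = mul z (invl l)"
    using False by (simp add: dedge_def tree_edge_iff il)
  also have "\<dots> \<longleftrightarrow> u \<in> S \<and> z \<in> S \<and> fst l < N \<and> z = mul u l"
  proof
    assume h: "z \<in> S \<and> u \<in> S \<and> z \<in> FN N \<and> fst l < N \<and> u = mul z (invl l)"
    then have zf: "z \<in> FN N" by simp
    have "mul (mul z (invl l)) (invl (invl l)) = z" by (rule mul_inverse[OF zf])
    then have "mul u l = z" using h inv_inv by metis
    from h have hu: "u \<in> S" "z \<in> S" "fst l < N" by auto
    show "u \<in> S \<and> z \<in> S \<and> fst l < N \<and> z = mul u l"
      using hu \<open>mul u l = z\<close> by (intro conjI) simp_all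
  next
    assume h: "u \<in> S \<and> z \<in> S \<and> fst l < N \<and> z = mul u l"
    then have "u \<in> FN N" using S by auto
    then have "mul z (invl l) = u" "z \<in> FN N" using h mul_inverse[of u N l] FN_mul by auto
    then have m: "mul z (invl l) = u" "z \<in> FN N" .
    from h have hu: "u \<in> S" "z \<in> S" "fst l < N" by auto
    show "z \<in> S \<and> u \<in> S \<and> z \<in> FN N \<and> fst l < N \<and> u = mul z (invl l)"
      using hu m by (intro conjI) simp_all
  qed
  finally show ?thesis .
qed

lemma tree_li: assumes S: "S \<subseteq> FN N" shows "locally_injective (tree_graph N S)"
  unfolding li_iff dedge_tree[OF S] by simp

lemma tree_labs: "labs N (tree_graph N S)"
  by (auto simp: labs_def tree_edge_iff)

lemma SubX1_D:
  assumes "T \<in> SubX1 N"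
  shows "finite T" "[] \<in> T" "T \<subseteq> FN N" "comp_verts (tree_graph N T) [] = T"
proof -
  have h: "finite T \<and> [] \<in> T \<and> T \<subseteq> FN N \<and> comp_verts (tree_graph N T) [] = T"
    using assms unfolding SubX1_def by (rule CollectD)
  show "finite T" using h by (elim conjE) assumption
  show "[] \<in> T" using h by (elim conjE) assumption
  show "T \<subseteq> FN N" using h by (elim conjE) assumption
  show "comp_verts (tree_graph N T) [] = T" using h by (elim conjE) assumption
qed

lemma prefix_closed:
  assumes T: "T \<in> SubX1 N" and w: "w \<in> T"
  shows "take k w \<in> T"
proof -
  have S: "T \<subseteq> FN N" using SubX1_D[OF T] by blast
  have "w \<in> comp_verts (tree_graph N T) []" using SubX1_D(4)[OF T] w by simp
  then have "([], w) \<in> {(u, w). adj (tree_graph N T) u w}\<^sup>*"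
    by (simp add: comp_verts_def)
  then have "\<forall>k. take k w \<in> T"
  proof (induction rule: rtrancl_induct)
    case base then show ?case using SubX1_D(2)[OF T] by simp
  next
    case (step y z)
    then obtain l where "dedge (tree_graph N T) y l z" by (auto simp: adj_iff)
    then have z: "z \<in> T" "z = mul y l" using dedge_tree[OF S] by auto
    show ?case
    proof
      fix k
      show "take k z \<in> T"
      proof (cases "y \<noteq> [] \<and> last y = invl l")
        case True
        then have "z = take (length y - 1) y" using z by (simp add: mul_def butlast_conv_take)
        then show ?thesis using step.IH by (simp add: min_def)
      next
        case False
        then have zz: "z = y @ [l]" using z(2) unfolding mul_def by auto
        show ?thesis
        proof (cases "k \<le> length y")
          case True then show ?thesis using zz step.IH by simp
        next
          case False then show ?thesis using zz z by simp
        qed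
      qed
    qed
  qed
  then show ?thesis by blast
qed

lemma prefix_closed_butlast: "T \<in> SubX1 N \<Longrightarrow> w \<in> T \<Longrightarrow> butlast w \<in> T"
  by (simp add: butlast_conv_take prefix_closed)

lemma prefix_closed_app: "T \<in> SubX1 N \<Longrightarrow> u @ w \<in> T \<Longrightarrow> u \<in> T"
  using prefix_closed[of T N "u@w" "length u"] by simp



lemma dedge_treeD:
  assumes "S \<subseteq> FN N" "dedge (tree_graph N S) u l z"
  shows "u \<in> S" "z \<in> S" "fst l < N" "z = mul u l"
  using iffD1[OF dedge_tree[OF assms(1)] assms(2)] by auto

lemma dedge_treeI:
  assumes "S \<subseteq> FN N" "u \<in> S" "mul u l \<in> S" "fst l < N"
  shows "dedge (tree_graph N S) u l (mul u l)"
  using assms dedge_tree[OF assms(1)] by simp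

definition Rd :: "nat \<Rightarrow> 'v rgraph \<Rightarrow> 'v \<Rightarrow> nat \<Rightarrow> letter list set" where
  "Rd N G v m = {w \<in> FN N. length w \<le> m \<and> (\<exists>y. walk G v w y)}"

lemma Rd_prefix: assumes "u @ w \<in> Rd N G v m" shows "u \<in> Rd N G v m"
proof -
  have "u @ w \<in> FN N" "length (u @ w) \<le> m" "\<exists>y. walk G v (u @ w) y"
    using assms unfolding Rd_def by auto
  then show ?thesis unfolding Rd_def FN_append walk_append by auto
qed

lemma walk_tree_self:
  assumes S: "S \<subseteq> FN N" and pc: "\<And>u w. u @ w \<in> S \<Longrightarrow> u \<in> S" and w: "w \<in> S"
  shows "walk (tree_graph N S) [] w w"
  using w
proof (induction w rule: rev_induct)
  case Nil then show ?case by simp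
next
  case (snoc l u)
  have u: "u \<in> S" using pc snoc.prems by blast
  have f: "u @ [l] \<in> FN N" using S snoc.prems by blast
  then have "fst l < N" by (simp add: FN_iff)
  moreover have "mul u l = u @ [l]" using f unfolding mul_def by (auto simp: FN_append)
  ultimately have "dedge (tree_graph N S) u l (u @ [l])" using dedge_tree[OF S] u snoc.prems by simp
  then show ?case using snoc.IH[OF u] unfolding walk_snoc by blast
qed

lemma walk_tree_in:
  assumes "walk (tree_graph N S) x w y" "x \<in> S" "S \<subseteq> FN N"
  shows "y \<in> S"
  using assms
proof (induction w arbitrary: y rule: rev_induct)
  case Nil then show ?case by simp
next
  case (snoc l w)
  then obtain z where "walk (tree_graph N S) x w z" "dedge (tree_graph N S) z l y" unfolding walk_snoc by blast
  then show ?case using dedge_treeD[OF snoc.prems(3)] by blast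
qed

lemma SubX1_I:
  assumes "finite S" "[] \<in> S" "S \<subseteq> FN N" "\<And>u w. u @ w \<in> S \<Longrightarrow> u \<in> S"
  shows "S \<in> SubX1 N"
proof -
  have "comp_verts (tree_graph N S) [] = S"
  proof
    show "comp_verts (tree_graph N S) [] \<subseteq> S"
    proof
      fix y assume "y \<in> comp_verts (tree_graph N S) []"
      then obtain w where "walk (tree_graph N S) [] w y" unfolding comp_verts_walk by blast
      then show "y \<in> S" using walk_tree_in assms(2,3) by blast
    qed
    show "S \<subseteq> comp_verts (tree_graph N S) []"
    proof
      fix y assume "y \<in> S"
      then have "walk (tree_graph N S) [] y y" using walk_tree_self[OF assms(3)] assms(4) by blast
      then show "y \<in> comp_verts (tree_graph N S) []" unfolding comp_verts_walk by blast
    qed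
  qed
  then show ?thesis using assms unfolding SubX1_def by blast
qed

lemma finite_FN_len: "finite {w \<in> FN N. length w \<le> m}"
proof -
  have "{w \<in> FN N. length w \<le> m} \<subseteq> {xs. set xs \<subseteq> {..<N} \<times> UNIV \<and> length xs \<le> m}"
    by (auto simp: FN_iff)
  moreover have "finite {xs. set xs \<subseteq> ({..<N} \<times> (UNIV :: bool set)) \<and> length xs \<le> m}"
    by (rule finite_lists_length_le) simp
  ultimately show ?thesis by (rule finite_subset)
qed

lemma Rd_SubX1: "Rd N G v m \<in> SubX1 N"
proof (rule SubX1_I)
  show "finite (Rd N G v m)"
    by (rule finite_subset[OF _ finite_FN_len[of N m]]) (auto simp: Rd_def)
  show "[] \<in> Rd N G v m" unfolding Rd_def by (simp, rule exI[of _ v], simp)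
  show "Rd N G v m \<subseteq> FN N" by (auto simp: Rd_def)
  show "\<And>u w. u @ w \<in> Rd N G v m \<Longrightarrow> u \<in> Rd N G v m" by (rule Rd_prefix)
qed

lemma dirs_tree:
  assumes S: "S \<subseteq> FN N"
  shows "dirs (tree_graph N S) u = (if u \<in> S then {l. fst l < N \<and> mul u l \<in> S} else {})"
  unfolding dirs_def dedge_tree[OF S] by auto

lemma degree_tree:
  assumes S: "S \<subseteq> FN N"
  shows "degree (tree_graph N S) u = card (dirs (tree_graph N S) u)"
  by (rule degree_dirs[OF tree_li[OF S] tree_labs])

lemma leaf_dirs:
  assumes S: "S \<subseteq> FN N" and pc: "\<And>u w. u @ w \<in> S \<Longrightarrow> u \<in> S"
    and u: "u \<in> S" "u \<noteq> []" and nl: "\<And>l. u @ [l] \<notin> S"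
  shows "dirs (tree_graph N S) u = {invl (last u)}"
proof -
  have uf: "u \<in> FN N" using S u by blast
  have ub: "u = butlast u @ [last u]" using u by simp
  have "butlast u \<in> S" using pc[of "butlast u" "[last u]"] ub u by simp
  have "fst (last u) < N" using uf u by (simp add: FN_iff)
  show ?thesis
  proof (rule set_eqI)
    fix l
    show "l \<in> dirs (tree_graph N S) u \<longleftrightarrow> l \<in> {invl (last u)}"
    proof (cases "l = invl (last u)")
      case True
      then have "mul u l = butlast u" using u unfolding mul_def by simp
      then show ?thesis using True u \<open>butlast u \<in> S\<close> \<open>fst (last u) < N\<close> by (simp add: dirs_tree[OF S])
    next
      case False
      then have "mul u l = u @ [l]" using u unfolding mul_def by (auto simp: inv_eq_iff)
      then show ?thesis using False u nl by (simp add: dirs_tree[OF S])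
    qed
  qed
qed

lemma leaf_degree:
  assumes S: "S \<subseteq> FN N" and pc: "\<And>u w. u @ w \<in> S \<Longrightarrow> u \<in> S"
    and u: "u \<in> S" "u \<noteq> []" and nl: "\<And>l. u @ [l] \<notin> S"
  shows "degree (tree_graph N S) u = 1"
  using leaf_dirs[OF assms] degree_tree[OF S] by simp

lemma mul_walk:
  assumes li: "locally_injective G" and "walk G p u x" "walk G p (mul u l) y"
  shows "dedge G x l y"
proof (cases "u \<noteq> [] \<and> last u = invl l")
  case True
  then have ub: "u = butlast u @ [invl l]" by (metis append_butlast_last_id)
  have "walk G p (butlast u @ [invl l]) x" using assms(2) by (subst (asm) ub)
  then obtain z where z: "walk G p (butlast u) z" "dedge G z (invl l) x" unfolding walk_snoc by blast
  have "mul u l = butlast u" using True unfolding mul_def by simp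
  then have "z = y" using walk_det[OF li z(1)] assms(3) by simp
  then show ?thesis using z(2) dedge_inv[of G z l x] by simp
next
  case False
  then have "mul u l = u @ [l]" unfolding mul_def by auto
  then have "walk G p (u @ [l]) y" using assms(3) by simp
  then obtain z where z: "walk G p u z" "dedge G z l y" unfolding walk_snoc by blast
  then show ?thesis using walk_det[OF li z(1) assms(2)] by simp
qed

lemma Rd_internal_dirs:
  assumes li: "locally_injective G" and lb: "labs N G"
    and u: "u \<in> Rd N G v m" "length u < m" and x: "walk G v u x"
  shows "dirs (tree_graph N (Rd N G v m)) u = dirs G x"
proof (rule set_eqI)
  fix l
  have S: "Rd N G v m \<subseteq> FN N" by (auto simp: Rd_def)
  have uf: "u \<in> FN N" using u by (simp add: Rd_def)
  show "l \<in> dirs (tree_graph N (Rd N G v m)) u \<longleftrightarrow> l \<in> dirs G x"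
  proof (cases "u \<noteq> [] \<and> last u = invl l")
    case True
    then have ub: "u = butlast u @ [invl l]" by (metis append_butlast_last_id)
    have "walk G v (butlast u @ [invl l]) x" using x by (subst (asm) ub)
    then obtain z where z: "walk G v (butlast u) z" "dedge G z (invl l) x" unfolding walk_snoc by blast
    have "dedge G x l z" using z(2) dedge_inv[of G z l x] by simp
    then have d: "l \<in> dirs G x" by (auto simp: dirs_def)
    have "butlast u \<in> Rd N G v m" using Rd_prefix[of "butlast u" "[invl l]"] ub u by simp
    moreover have "mul u l = butlast u" using True unfolding mul_def by simp
    moreover have "fst l < N" using labs_dedge[OF lb \<open>dedge G x l z\<close>] .
    ultimately show ?thesis using d u by (simp add: dirs_tree[OF S])
  next
    case False
    then have m: "mul u l = u @ [l]" unfolding mul_def by auto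
    have "l \<in> dirs (tree_graph N (Rd N G v m)) u \<longleftrightarrow> fst l < N \<and> u @ [l] \<in> Rd N G v m"
      using u m by (simp add: dirs_tree[OF S])
    also have "\<dots> \<longleftrightarrow> fst l < N \<and> (\<exists>y. walk G v (u @ [l]) y)"
    proof -
      have "u \<noteq> [] \<Longrightarrow> l \<noteq> invl (last u)" using False by (metis inv_inv)
      then have "fst l < N \<Longrightarrow> u @ [l] \<in> FN N"
        using uf by (auto simp: FN_iff red_snoc)
      then show ?thesis using u unfolding Rd_def by auto
    qed
    also have "\<dots> \<longleftrightarrow> l \<in> dirs G x"
    proof
      assume "fst l < N \<and> (\<exists>y. walk G v (u @ [l]) y)"
      then obtain y z where "walk G v u z" "dedge G z l y" unfolding walk_snoc by blast
      then show "l \<in> dirs G x" using walk_det[OF li _ x] by (auto simp: dirs_def)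
    next
      assume "l \<in> dirs G x"
      then obtain y where "dedge G x l y" by (auto simp: dirs_def)
      then show "fst l < N \<and> (\<exists>y. walk G v (u @ [l]) y)"
        using labs_dedge[OF lb] x unfolding walk_snoc by blast
    qed
    finally show ?thesis .
  qed
qed



lemma rmorph_dedge:
  assumes "rmorphism G H f" "dedge G u l w" shows "dedge H (f u) l (f w)"
  using assms unfolding rmorphism_def dedge_def by (cases "snd l") auto

lemma walk_verts:
  assumes wf: "wf_rgraph N G" and "v \<in> verts G" "walk G v w y" shows "y \<in> verts G"
  using assms(2,3)
proof (induction w arbitrary: v)
  case Nil then show ?case by simp
next
  case (Cons l w)
  then obtain z where z: "dedge G v l z" "walk G z w y" by auto
  have "z \<in> verts G" using z(1) wf unfolding wf_rgraph_def dedge_def by (cases "snd l") auto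
  then show ?case using Cons.IH z(2) by blast
qed

lemma core_li: "core_graph N D \<Longrightarrow> locally_injective D" by (simp add: core_graph_def)
lemma core_wf: "core_graph N D \<Longrightarrow> wf_rgraph N D" by (simp add: core_graph_def)
lemma core_labs: "core_graph N D \<Longrightarrow> labs N D" by (simp add: core_graph_def wf_labs)

lemma core_dirs2:
  assumes c: "core_graph N D" and x: "x \<in> verts D" shows "2 \<le> card (dirs D x)"
proof -
  have "degree D x \<noteq> 0" "degree D x \<noteq> 1" using c x unfolding core_graph_def by auto
  then show ?thesis using degree_dirs[OF core_li[OF c] core_labs[OF c]] by simp
qed

lemma Rd_walk:
  assumes li: "locally_injective G" and "w \<in> Rd N G v m"
  shows "walk G v w (THE y. walk G v w y)"
proof -
  obtain y where y: "walk G v w y" using assms(2) unfolding Rd_def by blast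
  show ?thesis by (rule theI[of _ y]) (use y walk_det[OF li] in blast)+
qed

lemma Rd_pc: "u @ w \<in> Rd N G v m \<Longrightarrow> u \<in> Rd N G v m" by (rule Rd_prefix)

lemma Rd_FN: "Rd N G v m \<subseteq> FN N" by (auto simp: Rd_def)

lemma Rd_Rm:
  assumes c: "core_graph N D" and v: "v \<in> verts D" and m: "1 \<le> m"
  shows "Rd N D v m \<in> Rm N m \<and> based_occurrence N (Rd N D v m) D v (\<lambda>w. THE y. walk D v w y)"
proof -
  let ?S = "Rd N D v m" and ?f = "\<lambda>w. THE y. walk D v w y"
  have li: "locally_injective D" using c by (rule core_li)
  have lb: "labs N D" using c by (rule core_labs)
  have S: "?S \<subseteq> FN N" by (rule Rd_FN)
  have fw: "\<And>w. w \<in> ?S \<Longrightarrow> walk D v w (?f w)" by (rule Rd_walk[OF li])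
  have fv: "\<And>w. w \<in> ?S \<Longrightarrow> ?f w \<in> verts D" using walk_verts[OF core_wf[OF c] v] fw by blast
  have len: "\<And>w. w \<in> ?S \<Longrightarrow> length w \<le> m" by (simp add: Rd_def)
  have intdeg: "\<And>w. w \<in> ?S \<Longrightarrow> length w < m \<Longrightarrow> degree (tree_graph N ?S) w = degree D (?f w)"
  proof -
    fix w assume w: "w \<in> ?S" "length w < m"
    have "degree (tree_graph N ?S) w = card (dirs (tree_graph N ?S) w)" by (rule degree_tree[OF S])
    also have "\<dots> = card (dirs D (?f w))" using Rd_internal_dirs[OF li lb w fw[OF w(1)]] by simp
    also have "\<dots> = degree D (?f w)" using degree_dirs[OF li lb] by simp
    finally show "degree (tree_graph N ?S) w = degree D (?f w)" .
  qed
  have leafdeg: "\<And>w. w \<in> ?S \<Longrightarrow> length w = m \<Longrightarrow> degree (tree_graph N ?S) w = 1"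
  proof -
    fix w assume w: "w \<in> ?S" "length w = m"
    have ne: "w \<noteq> []" using w m by auto
    have nl: "\<And>l. w @ [l] \<notin> ?S" using w len by fastforce
    show "degree (tree_graph N ?S) w = 1"
    proof (rule leaf_degree[OF S])
      show "\<And>u w. u @ w \<in> ?S \<Longrightarrow> u \<in> ?S" by (rule Rd_prefix)
    qed (use w(1) ne nl in auto)
  qed
  have e0: "[] \<in> ?S" by (rule SubX1_D(2)[OF Rd_SubX1])
  have f0: "?f [] = v" by simp
  have root: "2 \<le> degree (tree_graph N ?S) []"
    using intdeg[OF e0] m f0 core_dirs2[OF c v] degree_dirs[OF li lb] by simp
  have "?S \<in> Rm N m"
    unfolding Rm_def
  proof (intro CollectI conjI Rd_SubX1 root ballI impI)
    fix w assume w: "w \<in> ?S" and d: "degree (tree_graph N ?S) w = 1"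
    show "length w = m"
    proof (rule ccontr)
      assume "length w \<noteq> m"
      then have "length w < m" using len[OF w] by simp
      then have "degree (tree_graph N ?S) w = degree D (?f w)" by (rule intdeg[OF w])
      then show False using d core_dirs2[OF c fv[OF w]] degree_dirs[OF li lb] by simp
    qed
  qed
  moreover have "based_occurrence N ?S D v ?f"
    unfolding based_occurrence_def
  proof (intro conjI ballI impI)
    show "rmorphism (tree_graph N ?S) D ?f"
      unfolding rmorphism_def
    proof (intro conjI allI impI)
      show "?f ` verts (tree_graph N ?S) \<subseteq> verts D"
        using fv by (auto simp: tree_graph_def induced_def)
      fix u a w assume "(u, a, w) \<in> edges (tree_graph N ?S)"
      then have d: "dedge (tree_graph N ?S) u (a, True) w" by (simp add: dedge_def)
      have u: "u \<in> ?S" and ww: "w \<in> ?S" and wm: "w = mul u (a, True)" using dedge_treeD[OF S d] by auto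
      have "dedge D (?f u) (a, True) (?f w)"
        by (rule mul_walk[OF li fw[OF u]]) (use fw[OF ww] wm in simp)
      then show "(?f u, a, ?f w) \<in> edges D" by (simp add: dedge_def)
    qed
    show "?f [] = v" by (rule f0)
    fix w assume w: "w \<in> ?S" and d: "2 \<le> degree (tree_graph N ?S) w"
    have "length w < m"
    proof (rule ccontr)
      assume "\<not> length w < m"
      then have "length w = m" using len[OF w] by simp
      then show False using leafdeg[OF w] d by simp
    qed
    then show "degree D (?f w) = degree (tree_graph N ?S) w" using intdeg[OF w] by simp
  qed
  ultimately show ?thesis by blast
qed



lemma mul_snoc: "u @ [l] \<in> FN N \<Longrightarrow> mul u l = u @ [l]"
  unfolding mul_def by (auto simp: FN_append)

lemma Rm_unique:
  assumes c: "core_graph N D" and v: "v \<in> verts D" and m: "1 \<le> m"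
    and T: "T \<in> Rm N m" and occ: "based_occurrence N T D v g"
  shows "T = Rd N D v m"
proof -
  have li: "locally_injective D" using c by (rule core_li)
  have lb: "labs N D" using c by (rule core_labs)
  have TS: "T \<in> SubX1 N" using T by (simp add: Rm_def)
  have S: "T \<subseteq> FN N" by (rule SubX1_D(3)[OF TS])
  have pc: "\<And>u w. u @ w \<in> T \<Longrightarrow> u \<in> T" using prefix_closed_app[OF TS] by blast
  have e0: "[] \<in> T" by (rule SubX1_D(2)[OF TS])
  have fin: "finite T" by (rule SubX1_D(1)[OF TS])
  have rm: "rmorphism (tree_graph N T) D g" and g0: "g [] = v"
    and gdeg: "\<And>w. w \<in> T \<Longrightarrow> 2 \<le> degree (tree_graph N T) w \<Longrightarrow> degree D (g w) = degree (tree_graph N T) w"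
    using occ unfolding based_occurrence_def by auto
  have root: "2 \<le> degree (tree_graph N T) []" and leafc: "\<And>w. w \<in> T \<Longrightarrow> degree (tree_graph N T) w = 1 \<Longrightarrow> length w = m"
    using T unfolding Rm_def by auto
  have gw: "\<And>w. w \<in> T \<Longrightarrow> walk D v w (g w)"
  proof -
    fix w assume "w \<in> T"
    then show "walk D v w (g w)"
    proof (induction w rule: rev_induct)
      case Nil then show ?case using g0 by simp
    next
      case (snoc l u)
      have u: "u \<in> T" using pc snoc.prems by blast
      have f: "u @ [l] \<in> FN N" using S snoc.prems by blast
      then have fl: "fst l < N" by (simp add: FN_iff)
      have mm: "mul u l = u @ [l]" using mul_snoc[OF f] .
      have "dedge (tree_graph N T) u l (mul u l)" using dedge_treeI[OF S u _ fl] mm snoc.prems by simp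
      then have "dedge D (g u) l (g (u @ [l]))" using rmorph_dedge[OF rm] mm by metis
      then show ?case using snoc.IH[OF u] unfolding walk_snoc by blast
    qed
  qed
  have lenb: "\<And>w. w \<in> T \<Longrightarrow> length w \<le> m"
  proof -
    let ?M = "Max (length ` T)"
    have fl: "finite (length ` T)" using fin by simp
    have ne: "length ` T \<noteq> {}" using e0 by blast
    obtain w0 where w0: "w0 \<in> T" "length w0 = ?M" using Max_in[OF fl ne] by auto
    have Mge: "\<And>w. w \<in> T \<Longrightarrow> length w \<le> ?M" using Max_ge[OF fl] by simp
    have "?M \<le> m"
    proof (rule ccontr)
      assume "\<not> ?M \<le> m"
      then have ne0: "w0 \<noteq> []" using w0 by auto
      have nl: "\<And>l. w0 @ [l] \<notin> T" using Mge w0 by fastforce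
      have "degree (tree_graph N T) w0 = 1"
      proof (rule leaf_degree[OF S])
        show "\<And>u w. u @ w \<in> T \<Longrightarrow> u \<in> T" by (rule pc)
      qed (use w0(1) ne0 nl in auto)
      then have "length w0 = m" using leafc[OF w0(1)] by simp
      then show False using w0 \<open>\<not> ?M \<le> m\<close> by simp
    qed
    then show "\<And>w. w \<in> T \<Longrightarrow> length w \<le> m" using Mge by (meson le_trans)
  qed
  have sub1: "T \<subseteq> Rd N D v m"
  proof
    fix w assume w: "w \<in> T"
    then show "w \<in> Rd N D v m" unfolding Rd_def using S lenb gw by blast
  qed
  have sub2: "\<And>w. w \<in> Rd N D v m \<Longrightarrow> w \<in> T"
  proof -
    fix w assume "w \<in> Rd N D v m"
    then show "w \<in> T"
    proof (induction w rule: rev_induct)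
      case Nil then show ?case using e0 by simp
    next
      case (snoc l u)
      have uR: "u \<in> Rd N D v m" by (rule Rd_prefix[OF snoc.prems])
      have u: "u \<in> T" using snoc.IH[OF uR] .
      have f: "u @ [l] \<in> FN N" and lm: "length (u @ [l]) \<le> m" and wy: "\<exists>y. walk D v (u @ [l]) y"
        using snoc.prems unfolding Rd_def by auto
      have mm: "mul u l = u @ [l]" using mul_snoc[OF f] .
      have lu: "length u < m" using lm by simp
      have fd: "finite (dirs (tree_graph N T) u)" by (rule dirs_finite[OF tree_labs])
      have deg2: "2 \<le> degree (tree_graph N T) u"
      proof (cases "u = []")
        case True then show ?thesis using root by simp
      next
        case False
        have uf: "u \<in> FN N" using S u by blast
        have "mul u (invl (last u)) = butlast u" using False unfolding mul_def by simp
        moreover have "butlast u \<in> T" using pc[of "butlast u" "[last u]"] u False by simp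
        moreover have "fst (invl (last u)) < N" using uf False by (simp add: FN_iff)
        ultimately have "invl (last u) \<in> dirs (tree_graph N T) u" using u by (simp add: dirs_tree[OF S])
        then have "1 \<le> card (dirs (tree_graph N T) u)" using fd by (metis card_0_eq empty_iff less_one not_le)
        moreover have "degree (tree_graph N T) u \<noteq> 1" using leafc[OF u] lu by auto
        ultimately show ?thesis using degree_tree[OF S] by simp
      qed
      have dsub: "dirs (tree_graph N T) u \<subseteq> dirs D (g u)"
        unfolding dirs_def using rmorph_dedge[OF rm] by blast
      have "card (dirs (tree_graph N T) u) = card (dirs D (g u))"
        using gdeg[OF u deg2] degree_tree[OF S] degree_dirs[OF li lb] by simp
      then have deq: "dirs (tree_graph N T) u = dirs D (g u)"
        using card_subset_eq[OF dirs_finite[OF lb] dsub] by simp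
      obtain y z where "walk D v u z" "dedge D z l y" using wy unfolding walk_snoc by blast
      then have "dedge D (g u) l y" using walk_det[OF li _ gw[OF u]] by blast
      then have "l \<in> dirs (tree_graph N T) u" using deq by (auto simp: dirs_def)
      then have "mul u l \<in> T" using u by (simp add: dirs_tree[OF S])
      then show ?case using mm by simp
    qed
  qed
  show ?thesis using sub1 sub2 by blast
qed

lemma nbhd_eq:
  assumes c: "core_graph N D" and v: "v \<in> verts D" and m: "1 \<le> m"
  shows "nbhd N D m v = Rd N D v m"
  unfolding nbhd_def
proof (rule the_equality)
  show "Rd N D v m \<in> Rm N m \<and> (\<exists>f. based_occurrence N (Rd N D v m) D v f)"
    using Rd_Rm[OF c v m] by blast
  show "\<And>T. T \<in> Rm N m \<and> (\<exists>f. based_occurrence N T D v f) \<Longrightarrow> T = Rd N D v m"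
    using Rm_unique[OF c v m] by blast
qed



lemma invl_inj[simp]: "invl a = invl b \<longleftrightarrow> a = b" by (metis inv_inv)

lemma dedge_fp:
  "dedge (fiber_product G H) (x1, x2) l (y1, y2) \<longleftrightarrow> dedge G x1 l y1 \<and> dedge H x2 l y2"
  unfolding dedge_def fiber_product_def by (cases "snd l") auto

lemma walk_fp:
  "walk (fiber_product G H) (x1, x2) w (y1, y2) \<longleftrightarrow> walk G x1 w y1 \<and> walk H x2 w y2"
proof (induction w arbitrary: x1 x2)
  case Nil then show ?case by simp
next
  case (Cons l w)
  have "walk (fiber_product G H) (x1, x2) (l # w) (y1, y2) \<longleftrightarrow>
        (\<exists>z1 z2. dedge (fiber_product G H) (x1, x2) l (z1, z2) \<and> walk (fiber_product G H) (z1, z2) w (y1, y2))"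
    by auto
  also have "\<dots> \<longleftrightarrow> (\<exists>z1 z2. (dedge G x1 l z1 \<and> dedge H x2 l z2) \<and> (walk G z1 w y1 \<and> walk H z2 w y2))"
    by (simp only: dedge_fp Cons.IH)
  also have "\<dots> \<longleftrightarrow> walk G x1 (l # w) y1 \<and> walk H x2 (l # w) y2" by auto
  finally show ?case .
qed

lemma li_fp:
  assumes "locally_injective G" "locally_injective H"
  shows "locally_injective (fiber_product G H)"
  unfolding li_iff
proof (intro allI impI)
  fix x y y' :: "'a \<times> 'b" and l :: letter
  assume a: "dedge (fiber_product G H) x l y" "dedge (fiber_product G H) x l y'"
  obtain x1 x2 where x: "x = (x1, x2)" by (cases x)
  obtain y1 y2 where y: "y = (y1, y2)" by (cases y)
  obtain z1 z2 where z: "y' = (z1, z2)" by (cases y')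
  have "dedge G x1 l y1" "dedge H x2 l y2" "dedge G x1 l z1" "dedge H x2 l z2"
    using a unfolding x y z dedge_fp by auto
  then show "y = y'" using li_det[OF assms(1)] li_det[OF assms(2)] x y z by metis
qed

lemma labs_fp: "labs N G \<Longrightarrow> labs N (fiber_product G H)"
  unfolding labs_def fiber_product_def by auto

lemma Rd_fp: "Rd N G v1 m \<inter> Rd N H v2 m = Rd N (fiber_product G H) (v1, v2) m"
proof -
  have "\<And>w. (\<exists>y. walk (fiber_product G H) (v1, v2) w y) \<longleftrightarrow> (\<exists>y1. walk G v1 w y1) \<and> (\<exists>y2. walk H v2 w y2)"
  proof -
    fix w
    show "(\<exists>y. walk (fiber_product G H) (v1, v2) w y) \<longleftrightarrow> (\<exists>y1. walk G v1 w y1) \<and> (\<exists>y2. walk H v2 w y2)"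
    proof
      assume "\<exists>y. walk (fiber_product G H) (v1, v2) w y"
      then obtain y1 y2 where "walk (fiber_product G H) (v1, v2) w (y1, y2)" by auto
      then show "(\<exists>y1. walk G v1 w y1) \<and> (\<exists>y2. walk H v2 w y2)" unfolding walk_fp by blast
    next
      assume "(\<exists>y1. walk G v1 w y1) \<and> (\<exists>y2. walk H v2 w y2)"
      then obtain y1 y2 where "walk G v1 w y1" "walk H v2 w y2" by blast
      then have "walk (fiber_product G H) (v1, v2) w (y1, y2)" unfolding walk_fp by blast
      then show "\<exists>y. walk (fiber_product G H) (v1, v2) w y" by blast
    qed
  qed
  then show ?thesis unfolding Rd_def by blast
qed

lemma comp_step:
  assumes "u \<in> comp_verts G x" "dedge G u l w" shows "w \<in> comp_verts G x"
proof -
  obtain c where "walk G x c u" using assms(1) unfolding comp_verts_walk by blast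
  then have "walk G x (c @ [l]) w" using assms(2) unfolding walk_snoc by blast
  then show ?thesis unfolding comp_verts_walk by blast
qed

lemma dedge_comp:
  "dedge (component G x) u l w \<longleftrightarrow> dedge G u l w \<and> u \<in> comp_verts G x"
proof (cases "snd l")
  case True then show ?thesis by (simp add: dedge_def component_def)
next
  case False
  have "dedge G u l w \<Longrightarrow> (w \<in> comp_verts G x \<longleftrightarrow> u \<in> comp_verts G x)"
  proof -
    assume d: "dedge G u l w"
    then have d2: "dedge G w (invl l) u" by (simp add: dedge_inv)
    show "w \<in> comp_verts G x \<longleftrightarrow> u \<in> comp_verts G x" using comp_step[OF _ d] comp_step[OF _ d2] by blast
  qed
  then show ?thesis using False by (auto simp: dedge_def component_def)
qed

lemma strip_suffix:
  assumes li: "locally_injective G"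
  shows "u \<in> FN N \<Longrightarrow> w \<in> FN N \<Longrightarrow> walk G p u x \<Longrightarrow> walk G p w x \<Longrightarrow> u \<noteq> w \<Longrightarrow>
    \<exists>u' w' x'. u' \<in> FN N \<and> w' \<in> FN N \<and> walk G p u' x' \<and> walk G p w' x' \<and> u' \<noteq> w' \<and>
      (u' = [] \<or> w' = [] \<or> last u' \<noteq> last w')"
proof (induction "length u + length w" arbitrary: u w x rule: less_induct)
  case less
  show ?case
  proof (cases "u = [] \<or> w = [] \<or> last u \<noteq> last w")
    case True then show ?thesis using less.prems by blast
  next
    case False
    then have ne: "u \<noteq> []" "w \<noteq> []" and ll: "last u = last w" by auto
    define l where "l = last u"
    have ub: "u = butlast u @ [l]" using ne unfolding l_def by simp
    have wb: "w = butlast w @ [l]" using ne ll unfolding l_def by simp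
    have "walk G p (butlast u @ [l]) x" using less.prems(3) by (subst (asm) ub)
    then obtain y0 where y0: "walk G p (butlast u) y0" "dedge G y0 l x" unfolding walk_snoc by blast
    have "walk G p (butlast w @ [l]) x" using less.prems(4) by (subst (asm) wb)
    then obtain y1 where y1: "walk G p (butlast w) y1" "dedge G y1 l x" unfolding walk_snoc by blast
    have "y0 = y1" using li_det_back[OF li y0(2) y1(2)] .
    have "butlast u \<noteq> butlast w" using less.prems(5) ub wb by metis
    moreover have "length (butlast u) + length (butlast w) < length u + length w"
    proof -
      have "0 < length u" "0 < length w" using ne by auto
      then show ?thesis by (simp only: length_butlast)
    qed
    ultimately show ?thesis
      using less.hyps[of "butlast u" "butlast w" y0] FN_butlast less.prems(1,2) y0(1) y1(1) \<open>y0 = y1\<close>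
      by blast
  qed
qed

lemma closed_from_pair:
  assumes li: "locally_injective G"
    and u: "u \<in> FN N" and w: "w \<in> FN N" and wu: "walk G p u x" and ww: "walk G p w x" and ne: "u \<noteq> w"
    and lst: "u = [] \<or> w = [] \<or> last u \<noteq> last w"
  shows "\<exists>s. walk G p s p \<and> s \<noteq> [] \<and> s \<in> FN N"
proof (cases "w = []")
  case True
  then have "x = p" using ww by simp
  then show ?thesis using wu ne True u by blast
next
  case wne: False
  show ?thesis
  proof (cases "u = []")
    case True
    then have "x = p" using wu by simp
    then show ?thesis using ww ne True w by blast
  next
    case une: False
    have "walk G p (u @ invw w) p" unfolding walk_append using wu walk_invw[OF ww] by blast
    moreover have "u @ invw w \<in> FN N"
    proof -
      have "hd (invw w) \<noteq> invl (last u)"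
        using lst une wne by (simp add: hd_invw)
      then show ?thesis using u FN_invw[OF w] wne une by (simp add: FN_append)
    qed
    ultimately show ?thesis using une by blast
  qed
qed

lemma cyc_reduce:
  assumes li: "locally_injective G"
  shows "walk G p c y \<Longrightarrow> walk G y s y \<Longrightarrow> s \<noteq> [] \<Longrightarrow> c @ s \<in> FN N \<Longrightarrow>
    \<exists>c' s' y'. walk G p c' y' \<and> walk G y' s' y' \<and> s' \<noteq> [] \<and> c' @ s' \<in> FN N \<and> hd s' \<noteq> invl (last s')"
proof (induction "length s" arbitrary: c s y rule: less_induct)
  case less
  show ?case
  proof (cases "hd s \<noteq> invl (last s)")
    case True then show ?thesis using less.prems by blast
  next
    case False
    then have hl: "hd s = invl (last s)" by simp
    define a where "a = hd s"
    define q where "q = butlast (tl s)"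
    define b where "b = last s"
    have tne: "tl s \<noteq> []"
    proof
      assume "tl s = []"
      then have "s = [hd s]" using less.prems(3) by (cases s) auto
      then have "last s = hd s" by (metis last.simps)
      then show False using hl by simp
    qed
    have sdec: "s = a # q @ [b]"
    proof -
      have "s = hd s # tl s" using less.prems(3) by simp
      also have "tl s = butlast (tl s) @ [last (tl s)]" using tne by simp
      also have "last (tl s) = last s" using tne less.prems(3) by (metis last_tl)
      finally show ?thesis unfolding a_def q_def b_def .
    qed
    have ba: "b = invl a" using hl unfolding a_def b_def by simp
    have sfn: "s \<in> FN N" using less.prems(4) by (simp add: FN_append)
    have qne: "q \<noteq> []"
    proof
      assume "q = []"
      then have "s = [a, invl a]" using sdec ba by simp
      then show False using sfn by (simp add: FN_iff)
    qed
    have "walk G y (a # (q @ [b])) y" using less.prems(2) by (subst (asm) sdec)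
    then obtain z where z: "dedge G y a z" "walk G z (q @ [b]) y" by auto
    then obtain z' where z': "walk G z q z'" "dedge G z' b y" unfolding walk_snoc by blast
    have "dedge G y a z'" using z'(2) ba dedge_inv[of G z' a y] by simp
    then have "z' = z" using li_det[OF li _ z(1)] by blast
    then have wq: "walk G z q z" using z'(1) by simp
    have wc: "walk G p (c @ [a]) z" using less.prems(1) z(1) unfolding walk_snoc by blast
    have "(c @ [a] @ q) @ [b] \<in> FN N" using less.prems(4) sdec by simp
    then have cq: "(c @ [a]) @ q \<in> FN N" using FN_append by (metis append.assoc)
    have "length q < length s" using sdec by simp
    then show ?thesis using less.hyps[OF _ wc wq qne cq] by blast
  qed
qed

lemma concat_rep_snoc: "concat (replicate k s) @ s = s @ concat (replicate k s)"
  by (induction k) auto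

lemma pump:
  assumes "walk G p c y" "walk G y s y" "s \<noteq> []" "c @ s \<in> FN N" "hd s \<noteq> invl (last s)"
  shows "c @ concat (replicate k s) \<in> FN N \<and> walk G p (c @ concat (replicate k s)) y"
proof (induction k)
  case 0 then show ?case using assms(1,4) by (simp add: FN_append)
next
  case (Suc k)
  have eq: "c @ concat (replicate (Suc k) s) = (c @ concat (replicate k s)) @ s"
    using concat_rep_snoc[of k s] by simp
  have sf: "s \<in> FN N" using assms(4) by (simp add: FN_append)
  have j: "c @ concat (replicate k s) \<noteq> [] \<Longrightarrow> hd s \<noteq> invl (last (c @ concat (replicate k s)))"
  proof (cases k)
    case 0
    then show "c @ concat (replicate k s) \<noteq> [] \<Longrightarrow> hd s \<noteq> invl (last (c @ concat (replicate k s)))"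
      using assms(3,4) by (simp add: FN_append)
  next
    case (Suc k')
    have "concat (replicate k s) = concat (replicate k' s) @ s" using Suc concat_rep_snoc[of k' s] by simp
    then have "last (c @ concat (replicate k s)) = last s" using assms(3) by simp
    then show "c @ concat (replicate k s) \<noteq> [] \<Longrightarrow> hd s \<noteq> invl (last (c @ concat (replicate k s)))"
      using assms(5) by simp
  qed
  have "(c @ concat (replicate k s)) @ s \<in> FN N"
    using Suc.IH sf j assms(3) by (simp add: FN_append del: append_assoc)
  moreover have "walk G p ((c @ concat (replicate k s)) @ s) y"
    using Suc.IH assms(2) unfolding walk_append by blast
  ultimately show ?case using eq by simp
qed

lemma len_pump: "k \<le> length (c @ concat (replicate k s))" if "s \<noteq> []"
proof -
  have "length (concat (replicate k s)) = k * length s" by (simp add: length_concat sum_list_replicate)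
  moreover have "k \<le> k * length s"
  proof -
    have "1 \<le> length s" using that by (cases s) auto
    then have "k * 1 \<le> k * length s" by (rule mult_le_mono2)
    then show ?thesis by simp
  qed
  ultimately show ?thesis by (simp only: length_append)
qed

lemma inj_walk:
  assumes li: "locally_injective G"
    and bnd: "\<And>w y. w \<in> FN N \<Longrightarrow> walk G p w y \<Longrightarrow> length w \<le> r"
    and u: "u \<in> FN N" and w: "w \<in> FN N" and wu: "walk G p u x" and ww: "walk G p w x"
  shows "u = w"
proof (rule ccontr)
  assume "u \<noteq> w"
  then obtain u' w' x' where uw: "u' \<in> FN N" "w' \<in> FN N" "walk G p u' x'" "walk G p w' x'" "u' \<noteq> w'"
      "u' = [] \<or> w' = [] \<or> last u' \<noteq> last w'"
    using strip_suffix[OF li u w wu ww] by blast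
  obtain s where s: "walk G p s p" "s \<noteq> []" "s \<in> FN N"
    using closed_from_pair[OF li uw] by blast
  have w0: "walk G p [] p" by simp
  have s3: "[] @ s \<in> FN N" using s(3) by simp
  obtain c' s' y' where cs: "walk G p c' y'" "walk G y' s' y'" "s' \<noteq> []" "c' @ s' \<in> FN N" "hd s' \<noteq> invl (last s')"
    using cyc_reduce[OF li w0 s(1) s(2) s3] by blast
  have "c' @ concat (replicate (Suc r) s') \<in> FN N \<and> walk G p (c' @ concat (replicate (Suc r) s')) y'"
    by (rule pump[OF cs])
  then have "length (c' @ concat (replicate (Suc r) s')) \<le> r" using bnd by blast
  moreover have "Suc r \<le> length (c' @ concat (replicate (Suc r) s'))" by (rule len_pump[OF cs(3)])
  ultimately show False by simp
qed



lemma iso_dedge: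
  assumes e: "\<forall>u\<in>T. \<forall>w\<in>T. \<forall>a. (u, a, w) \<in> edges A \<longleftrightarrow> (h u, a, h w) \<in> edges B"
    and u: "u \<in> T" and w: "w \<in> T"
  shows "dedge A u l w \<longleftrightarrow> dedge B (h u) l (h w)"
  using e u w unfolding dedge_def by (cases "snd l") auto

lemma iso_iff:
  assumes li: "locally_injective P" and lb: "labs N P"
    and T: "T \<in> SubX1 N" and Tb: "T \<subseteq> ballX N r"
  shows "based_iso (tree_graph N T) [] (component P p) p \<longleftrightarrow> Rd N P p (r + 1) = T"
proof -
  have S: "T \<subseteq> FN N" by (rule SubX1_D(3)[OF T])
  have e0: "[] \<in> T" by (rule SubX1_D(2)[OF T])
  have pc: "\<And>u w. u @ w \<in> T \<Longrightarrow> u \<in> T" using prefix_closed_app[OF T] by blast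
  have lenT: "\<And>w. w \<in> T \<Longrightarrow> length w \<le> r" using Tb unfolding ballX_def by blast
  show ?thesis
  proof
    assume "based_iso (tree_graph N T) [] (component P p) p"
    then obtain h where bij: "bij_betw h (verts (tree_graph N T)) (verts (component P p))" and h0: "h [] = p"
      and e: "\<forall>u\<in>verts (tree_graph N T). \<forall>w\<in>verts (tree_graph N T). \<forall>a.
               (u, a, w) \<in> edges (tree_graph N T) \<longleftrightarrow> (h u, a, h w) \<in> edges (component P p)"
      unfolding based_iso_def by blast
    have vT: "verts (tree_graph N T) = T" by (simp add: tree_graph_def induced_def)
    have vC: "verts (component P p) = comp_verts P p" by (simp add: component_def)
    have bij': "bij_betw h T (comp_verts P p)" using bij vT vC by simp
    have e': "\<forall>u\<in>T. \<forall>w\<in>T. \<forall>a. (u, a, w) \<in> edges (tree_graph N T) \<longleftrightarrow> (h u, a, h w) \<in> edges (component P p)"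
      using e vT by simp
    have himg: "h ` T = comp_verts P p" using bij' by (simp add: bij_betw_def)
    have hC: "\<And>w. w \<in> T \<Longrightarrow> h w \<in> comp_verts P p"
    proof -
      fix w assume "w \<in> T"
      then have "h w \<in> h ` T" by (rule imageI)
      then show "h w \<in> comp_verts P p" using himg by simp
    qed
    have hw: "\<And>w. w \<in> T \<Longrightarrow> walk P p w (h w)"
    proof -
      fix w assume "w \<in> T"
      then show "walk P p w (h w)"
      proof (induction w rule: rev_induct)
        case Nil then show ?case using h0 by simp
      next
        case (snoc l u)
        have u: "u \<in> T" using pc snoc.prems by blast
        have f: "u @ [l] \<in> FN N" using S snoc.prems by blast
        then have fl: "fst l < N" by (simp add: FN_iff)
        have mm: "mul u l = u @ [l]" using mul_snoc[OF f] .
        have "dedge (tree_graph N T) u l (mul u l)" using dedge_treeI[OF S u _ fl] mm snoc.prems by simp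
        then have "dedge (tree_graph N T) u l (u @ [l])" using mm by simp
        then have "dedge (component P p) (h u) l (h (u @ [l]))"
          using iso_dedge[OF e' u snoc.prems] by simp
        then have "dedge P (h u) l (h (u @ [l]))" by (simp add: dedge_comp)
        then show ?case using snoc.IH[OF u] unfolding walk_snoc by blast
      qed
    qed
    have bk: "\<And>w y. w \<in> FN N \<Longrightarrow> walk P p w y \<Longrightarrow> w \<in> T \<and> h w = y"
    proof -
      fix w y assume "w \<in> FN N" "walk P p w y"
      then show "w \<in> T \<and> h w = y"
      proof (induction w arbitrary: y rule: rev_induct)
        case Nil then show ?case using e0 h0 by simp
      next
        case (snoc l u)
        obtain y0 where y0: "walk P p u y0" "dedge P y0 l y" using snoc.prems(2) unfolding walk_snoc by blast
        have uf: "u \<in> FN N" using snoc.prems(1) by (simp add: FN_append)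
        have IH: "u \<in> T \<and> h u = y0" using snoc.IH[OF uf y0(1)] .
        have y0C: "y0 \<in> comp_verts P p" using hC IH by auto
        then have yC: "y \<in> comp_verts P p" using comp_step[OF _ y0(2)] by blast
        have "h ` T = comp_verts P p" using bij' by (simp add: bij_betw_def)
        then have "y \<in> h ` T" using yC by simp
        then obtain t where t: "t \<in> T" "h t = y" by (auto elim!: imageE)
        have "dedge (component P p) (h u) l (h t)" using y0(2) IH t y0C by (simp add: dedge_comp)
        then have "dedge (tree_graph N T) u l t" using iso_dedge[OF e' _ t(1)] IH by blast
        then have "t = mul u l" using dedge_treeD[OF S] by blast
        then have "t = u @ [l]" using mul_snoc[OF snoc.prems(1)] by simp
        then show ?case using t by simp
      qed
    qed
    show "Rd N P p (r + 1) = T"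
    proof
      show "Rd N P p (r + 1) \<subseteq> T" unfolding Rd_def using bk by blast
      show "T \<subseteq> Rd N P p (r + 1)"
      proof
        fix w assume w: "w \<in> T"
        then have "w \<in> FN N" "length w \<le> r + 1" "walk P p w (h w)" using S lenT[OF w] hw[OF w] by auto
        then show "w \<in> Rd N P p (r + 1)" unfolding Rd_def by blast
      qed
    qed
  next
    assume RT: "Rd N P p (r + 1) = T"
    have bnd: "\<And>w y. w \<in> FN N \<Longrightarrow> walk P p w y \<Longrightarrow> length w \<le> r"
    proof (rule ccontr)
      fix w y assume w: "w \<in> FN N" "walk P p w y" and nl: "\<not> length w \<le> r"
      have "walk P p (take (r + 1) w @ drop (r + 1) w) y" using w(2) by simp
      then obtain z where z: "walk P p (take (r + 1) w) z" unfolding walk_append by blast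
      have "take (r + 1) w \<in> Rd N P p (r + 1)" unfolding Rd_def using FN_take[OF w(1)] z by auto
      then have "take (r + 1) w \<in> T" using RT by simp
      then have "length (take (r + 1) w) \<le> r" by (rule lenT)
      then show False using nl by simp
    qed
    have inT: "\<And>w y. w \<in> FN N \<Longrightarrow> walk P p w y \<Longrightarrow> w \<in> T"
    proof -
      fix w y assume w: "w \<in> FN N" "walk P p w y"
      have "length w \<le> r + 1" using bnd[OF w] by simp
      then have "w \<in> Rd N P p (r + 1)" unfolding Rd_def using w by blast
      then show "w \<in> T" using RT by simp
    qed
    define h where "h = (\<lambda>w. THE y. walk P p w y)"
    have hw: "\<And>w. w \<in> T \<Longrightarrow> walk P p w (h w)"
      unfolding h_def using Rd_walk[OF li] RT by blast
    have hdet: "\<And>w y. walk P p w y \<Longrightarrow> h w = y"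
      unfolding h_def using walk_det[OF li] by blast
    have inj: "inj_on h T"
    proof (rule inj_onI)
      fix u w assume u: "u \<in> T" and w: "w \<in> T" and e: "h u = h w"
      have ww: "walk P p w (h u)" using hw[OF w] e by simp
      have uf: "u \<in> FN N" and wf: "w \<in> FN N" using u w S by auto
      show "u = w" by (rule inj_walk[OF li bnd uf wf hw[OF u] ww])
    qed
    have img: "h ` T = comp_verts P p"
    proof
      show "h ` T \<subseteq> comp_verts P p"
      proof
        fix y assume "y \<in> h ` T"
        then obtain w where w: "w \<in> T" "y = h w" by blast
        then have "walk P p w y" using hw by simp
        then show "y \<in> comp_verts P p" unfolding comp_verts_walk by blast
      qed
      show "comp_verts P p \<subseteq> h ` T"
      proof
        fix y assume "y \<in> comp_verts P p"
        then obtain w where "walk P p w y" unfolding comp_verts_walk by blast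
        then obtain w' where w': "w' \<in> FN N" "walk P p w' y" using walk_reduce[OF li lb] by blast
        then have "w' \<in> T" "h w' = y" using inT hdet by auto
        then show "y \<in> h ` T" by blast
      qed
    qed
    have edges: "\<And>u w a. u \<in> T \<Longrightarrow> w \<in> T \<Longrightarrow>
        (u, a, w) \<in> edges (tree_graph N T) \<longleftrightarrow> (h u, a, h w) \<in> edges (component P p)"
    proof -
      fix u w a assume u: "u \<in> T" and w: "w \<in> T"
      have hu: "h u \<in> comp_verts P p" using img u by blast
      have "(h u, a, h w) \<in> edges (component P p) \<longleftrightarrow> dedge P (h u) (a, True) (h w)"
        using hu by (simp add: component_def dedge_def)
      moreover have "(u, a, w) \<in> edges (tree_graph N T) \<longleftrightarrow> dedge (tree_graph N T) u (a, True) w"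
        by (simp add: dedge_def)
      moreover have "dedge (tree_graph N T) u (a, True) w \<longleftrightarrow> dedge P (h u) (a, True) (h w)"
      proof
        assume d: "dedge (tree_graph N T) u (a, True) w"
        then have "w = mul u (a, True)" using dedge_treeD[OF S] by blast
        then show "dedge P (h u) (a, True) (h w)" using mul_walk[OF li hw[OF u]] hw[OF w] by simp
      next
        assume d: "dedge P (h u) (a, True) (h w)"
        have uf: "u \<in> FN N" using S u by blast
        have fl: "fst (a, True) < N" using labs_dedge[OF lb d] .
        have wm: "walk P p (mul u (a, True)) (h w)" using walk_mul[OF li hw[OF u] uf d] .
        have mf: "mul u (a, True) \<in> FN N" using FN_mul[OF uf fl] .
        have mT: "mul u (a, True) \<in> T" using inT[OF mf wm] .
        have "h (mul u (a, True)) = h w" using hdet[OF wm] .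
        then have "mul u (a, True) = w" using inj mT w unfolding inj_on_def by blast
        then show "dedge (tree_graph N T) u (a, True) w" using dedge_treeI[OF S u mT fl] by simp
      qed
      ultimately show "(u, a, w) \<in> edges (tree_graph N T) \<longleftrightarrow> (h u, a, h w) \<in> edges (component P p)"
        by simp
    qed
    have h0: "h [] = p" using hdet[of "[]" p] by simp
    show "based_iso (tree_graph N T) [] (component P p) p"
      unfolding based_iso_def
    proof (intro exI conjI)
      show "bij_betw h (verts (tree_graph N T)) (verts (component P p))"
        using inj img by (simp add: bij_betw_def tree_graph_def induced_def component_def)
      show "h [] = p" by (rule h0)
      show "\<forall>u\<in>verts (tree_graph N T). \<forall>w\<in>verts (tree_graph N T). \<forall>a.
          (u, a, w) \<in> edges (tree_graph N T) \<longleftrightarrow> (h u, a, h w) \<in> edges (component P p)"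
        using edges by (simp add: tree_graph_def induced_def)
    qed
  qed
qed

theorem mainTheorem12:
  fixes N r :: nat and T :: "letter list set"
    and D1 :: "'a rgraph" and D2 :: "'b rgraph" and v1 :: 'a and v2 :: 'b
  assumes "N \<ge> 2"
    and "T \<in> SubX1 N" and "T \<subseteq> ballX N r"
    and "core_graph N D1" and "core_graph N D2"
    and "v1 \<in> verts D1" and "v2 \<in> verts D2"
  shows "based_iso (tree_graph N T) [] (component (fiber_product D1 D2) (v1, v2)) (v1, v2)
     \<longleftrightarrow> nbhd N D1 (r + 1) v1 \<inter> nbhd N D2 (r + 1) v2 = T"
proof -
  have "nbhd N D1 (r + 1) v1 \<inter> nbhd N D2 (r + 1) v2 = Rd N D1 v1 (r + 1) \<inter> Rd N D2 v2 (r + 1)"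
    using nbhd_eq[OF assms(4) assms(6)] nbhd_eq[OF assms(5) assms(7)] by simp
  also have "\<dots> = Rd N (fiber_product D1 D2) (v1, v2) (r + 1)" by (rule Rd_fp)
  finally have eq: "nbhd N D1 (r + 1) v1 \<inter> nbhd N D2 (r + 1) v2 = Rd N (fiber_product D1 D2) (v1, v2) (r + 1)" .
  have li: "locally_injective (fiber_product D1 D2)"
    by (rule li_fp[OF core_li[OF assms(4)] core_li[OF assms(5)]])
  have lb: "labs N (fiber_product D1 D2)" by (rule labs_fp[OF core_labs[OF assms(4)]])
  show ?thesis unfolding eq by (rule iso_iff[OF li lb assms(2) assms(3)])
qed


end
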